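(* Let $p<q$ be odd primes. Then $n=pq$ is a $G$-Lehmer number if and only if $q=p+2$ and $8$ divides $p+q$.
   Context: For a positive integer $n$, $\mathcal{G}_n=\{a+bi\in\mathbb{Z}[i]/n\mathbb{Z}[i] : a^2+b^2\equiv 1\pmod n\}$ and $\Phi(n)=|\mathcal{G}_n|$. The function $\mathcal{F}$ is defined by $\mathcal{F}(n)=n-1$ if $n\equiv 1\pmod 4$, $\mathcal{F}(n)=n+1$ if $n\equiv 3 \pmod 4$, $\mathcal{F}(n)=n$ otherwise. A composite number $n$ is a $G$-Lehmer number if $\Phi(n)$ divides $\mathcal{F}(n)$. *)

theory Defs
  imports "HOL-Computational_Algebra.Primes"
begin

text \<open>The unit circle group G_n in Z[i]/nZ[i]: elements a+bi with a,b residues mod n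
  (represented by 0 <= a,b < n) such that a^2+b^2 = 1 (mod n).\<close>
definition G_set :: "nat \<Rightarrow> (nat \<times> nat) set" where
  "G_set n = {(a, b). a < n \<and> b < n \<and> (a^2 + b^2) mod n = 1 mod n}"

definition Phi :: "nat \<Rightarrow> nat" where
  "Phi n = card (G_set n)"

definition F :: "nat \<Rightarrow> nat" where
  "F n = (if n mod 4 = 1 then n - 1 else if n mod 4 = 3 then n + 1 else n)"

definition G_Lehmer :: "nat \<Rightarrow> bool" where
  "G_Lehmer n \<longleftrightarrow> n > 1 \<and> \<not> prime n \<and> Phi n dvd F n"

end

theory Submission imports Defs "HOL-Number_Theory.Number_Theory" begin

lemma sqrt_neg1_iff:
  fixes p :: nat
  assumes p: "prime p" "odd p"
  shows "(\<exists>y::int. [y^2 = -1] (mod int p)) \<longleftrightarrow> p mod 4 = 1"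
proof -
  have p2: "p > 2" using p prime_ge_2_nat[of p] by (metis dvd_refl le_neq_implies_less)
  have E: "[Legendre (-1) (int p) = (-1) ^ ((p - 1) div 2)] (mod int p)"
    using euler_criterion[OF p(1) p2] by simp
  have n2: "\<not> [-1 = (1::int)] (mod int p)"
  proof
    assume "[-1 = (1::int)] (mod int p)"
    then have "int p dvd 2" by (simp add: cong_iff_dvd_diff)
    then have "p dvd 2" by presburger
    then have "p \<le> 2" by (simp add: dvd_imp_le)
    then show False using p2 by simp
  qed
  have n0: "\<not> [-1 = (0::int)] (mod int p)"
  proof
    assume "[-1 = (0::int)] (mod int p)"
    then have "int p dvd 1" by (simp add: cong_iff_dvd_diff)
    then show False using p2 by simp
  qed
  show ?thesis
  proof
    assume "\<exists>y::int. [y^2 = -1] (mod int p)"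
    then have L: "Legendre (-1) (int p) = 1" using n0 unfolding Legendre_def QuadRes_def by auto
    show "p mod 4 = 1"
    proof (rule ccontr)
      assume "p mod 4 \<noteq> 1"
      then have "p mod 4 = 3" using p(2) by presburger
      then have "odd (((p - 1) div 2))" by presburger
      then have "(-1::int) ^ ((p - 1) div 2) = -1" by simp
      then show False using E L n2 by (simp add: cong_sym)
    qed
  next
    assume "p mod 4 = 1"
    then have "even (((p - 1) div 2))" by presburger
    then have "(-1::int) ^ ((p - 1) div 2) = 1" by simp
    then have "Legendre (-1) (int p) \<noteq> -1" using E n2 by auto
    then show "\<exists>y::int. [y^2 = -1] (mod int p)" unfolding Legendre_def QuadRes_def
      using n0 by (auto split: if_splits)
  qed
qed

lemma roots_card:
  fixes p :: nat
  assumes p: "prime p" "odd p"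
  shows "card {t. t < p \<and> p dvd t^2 + 1} = (if p mod 4 = 1 then 2 else 0)"
proof (cases "p mod 4 = 1")
  case False
  have "{t. t < p \<and> p dvd t^2 + 1} = {}"
  proof (rule ccontr)
    assume "{t. t < p \<and> p dvd t^2 + 1} \<noteq> {}"
    then obtain t where "p dvd t^2 + 1" by auto
    then have "int p dvd int t ^2 + 1" by (metis of_nat_dvd_iff of_nat_1 of_nat_add of_nat_power)
    then have "[(int t)^2 = -1] (mod int p)" by (simp add: cong_iff_dvd_diff)
    then show False using sqrt_neg1_iff[OF p] False by blast
  qed
  then show ?thesis using False by simp
next
  case True
  have p2: "p > 2" using p prime_ge_2_nat[of p] by (metis dvd_refl le_neq_implies_less)
  obtain y :: int where y: "[y^2 = -1] (mod int p)" using sqrt_neg1_iff[OF p] True by blast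
  define t where "t = nat (y mod int p)"
  have tl: "t < p" using p2 unfolding t_def by (simp add: nat_less_iff)
  have ti: "int t = y mod int p" using p2 unfolding t_def by simp
  have "[(int t)^2 = y^2] (mod int p)" unfolding ti by (simp add: cong_def power_mod)
  then have "[(int t)^2 = -1] (mod int p)" using y cong_trans by blast
  then have tdi: "int p dvd (int t)^2 + 1" by (simp add: cong_iff_dvd_diff)
  then have td: "p dvd t^2 + 1" by (metis of_nat_dvd_iff of_nat_1 of_nat_add of_nat_power)
  have t0: "t \<noteq> 0" using td p2 by (cases "t = 0") auto
  have "int p dvd (int p - int t)^2 + 1"
  proof -
    have "(int p - int t)^2 + 1 = int p * (int p - 2 * int t) + ((int t)^2 + 1)"
      by (simp add: power2_eq_square algebra_simps)
    moreover have "int p dvd int p * (int p - 2 * int t) + ((int t)^2 + 1)"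
      by (rule dvd_add[OF dvd_triv_left tdi])
    ultimately show ?thesis by (simp add: add.assoc)
  qed
  then have "int p dvd int (p - t)^2 + 1" using tl by (simp add: of_nat_diff)
  then have td2: "p dvd (p - t)^2 + 1" by (metis of_nat_dvd_iff of_nat_1 of_nat_add of_nat_power)
  have "{t. t < p \<and> p dvd t^2 + 1} = {t, p - t}"
  proof (intro equalityI subsetI)
    fix s assume "s \<in> {t. t < p \<and> p dvd t^2 + 1}"
    then have sl: "s < p" and sd: "p dvd s^2 + 1" by auto
    then have sdi: "int p dvd (int s)^2 + 1" by (metis of_nat_dvd_iff of_nat_1 of_nat_add of_nat_power)
    have s0: "s \<noteq> 0" using sd p2 by (cases "s = 0") auto
    have "int p dvd ((int s)^2 + 1) - ((int t)^2 + 1)" using sdi tdi by (rule dvd_diff)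
    moreover have "((int s)^2 + 1) - ((int t)^2 + 1) = (int s - int t) * (int s + int t)"
      by (simp add: power2_eq_square algebra_simps)
    ultimately have "int p dvd (int s - int t) * (int s + int t)" by simp
    moreover have "prime (int p)" using p by simp
    ultimately have "int p dvd (int s - int t) \<or> int p dvd (int s + int t)"
      using prime_dvd_mult_iff by blast
    then show "s \<in> {t, p - t}"
    proof
      assume "int p dvd (int s - int t)"
      then have "[int s = int t] (mod int p)" by (simp add: cong_iff_dvd_diff)
      then have "[s = t] (mod p)" by (simp add: cong_int_iff)
      then have "s = t" using sl tl cong_less_modulus_unique_nat by blast
      then show ?thesis by simp
    next
      assume "int p dvd (int s + int t)"
      then obtain k where k: "int s + int t = int p * k" by (auto elim: dvdE)
      have "int p * k > 0" using k s0 t0 by linarith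
      then have "k > 0" using p2 by (simp add: zero_less_mult_iff)
      moreover have "int p * k < int p * 2" using k sl tl by linarith
      then have "k < 2" using p2 by (simp add: mult_less_cancel_left_pos)
      ultimately have "k = 1" by simp
      then have "s = p - t" using k by simp
      then show ?thesis by simp
    qed
  next
    fix s assume "s \<in> {t, p - t}"
    then show "s \<in> {t. t < p \<and> p dvd t^2 + 1}" using tl t0 td td2 by auto
  qed
  moreover have "t \<noteq> p - t" using p(2) tl by presburger
  ultimately show ?thesis using True by simp
qed


lemma key1:
  fixes p a b t :: nat
  assumes "coprime (a+1) p" "[a^2 + b^2 = 1] (mod p)" "[t*(a+1) = b] (mod p)"
  shows "[(a+1)*(1+t^2) = 2] (mod p)"
proof -
  have "[(t*(a+1))^2 = b^2] (mod p)" using assms(3) by (rule cong_pow)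
  then have "[(a^2 + (t*(a+1))^2) + (2*a+1) = (a^2 + b^2) + (2*a+1)] (mod p)"
    by (intro cong_add cong_refl)
  also have "[(a^2 + b^2) + (2*a+1) = 1 + (2*a+1)] (mod p)"
    using assms(2) by (intro cong_add cong_refl)
  finally have H: "[(a^2 + (t*(a+1))^2) + (2*a+1) = 1 + (2*a+1)] (mod p)" .
  have e1: "(a+1)*((a+1)*(1+t^2)) = (a^2 + (t*(a+1))^2) + (2*a+1)"
    by (simp add: power2_eq_square algebra_simps)
  have e2: "(a+1)*2 = 1 + (2*a+1)" by simp
  have "[(a+1)*((a+1)*(1+t^2)) = (a+1)*2] (mod p)" unfolding e1 e2 by (rule H)
  then show ?thesis by (metis cong_mult_lcancel_nat assms(1))
qed

lemma key2:
  fixes p a b t :: nat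
  assumes "[(a+1)*(1+t^2) = 2] (mod p)" "[b = t*(a+1)] (mod p)"
  shows "[a^2 + b^2 = 1] (mod p)"
proof -
  have "[b^2 = (t*(a+1))^2] (mod p)" using assms(2) by (rule cong_pow)
  then have "[(a^2 + b^2) + (2*a+1) = (a^2 + (t*(a+1))^2) + (2*a+1)] (mod p)"
    by (intro cong_add cong_refl)
  also have "(a^2 + (t*(a+1))^2) + (2*a+1) = (a+1)*((a+1)*(1+t^2))"
    by (simp add: power2_eq_square algebra_simps)
  also have "[(a+1)*((a+1)*(1+t^2)) = (a+1)*2] (mod p)"
    using assms(1) by (intro cong_mult cong_refl)
  also have "(a+1)*2 = 1 + (2*a+1)" by simp
  finally have "[(a^2 + b^2) + (2*a+1) = 1 + (2*a+1)] (mod p)" .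
  then show ?thesis by (simp only: cong_add_rcancel_nat)
qed

lemma circle_count:
  fixes p :: nat
  assumes p: "prime p" "odd p"
  shows "card (G_set p) + card {t. t < p \<and> p dvd t^2 + 1} = p + 1"
proof -
  have p2: "p > 2" using p prime_ge_2_nat[of p] by (metis dvd_refl le_neq_implies_less)
  define S' where "S' = G_set p - {(p-1,0)}"
  define T where "T = {t. t < p \<and> \<not> p dvd t^2 + 1}"
  define R where "R = {t. t < p \<and> p dvd t^2 + 1}"
  have cop: "coprime c p" if "\<not> p dvd c" for c
    using p(1) that by (metis coprime_commute prime_imp_coprime)
  have n2: "\<not> [2 = 0] (mod p)"
  proof
    assume "[2 = 0] (mod p)"
    then have "p dvd 2" by (metis cong_0_iff cong_sym)
    then show False using p2 by (simp add: dvd_imp_le leD)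
  qed
  have mem: "(a,b) \<in> G_set p \<longleftrightarrow> a < p \<and> b < p \<and> [a^2+b^2 = 1] (mod p)" for a b
    unfolding G_set_def cong_def by simp
  have finG: "finite (G_set p)"
    by (rule finite_subset[of _ "{..<p} \<times> {..<p}"]) (auto simp: G_set_def)
  have pm1: "(p-1, 0) \<in> G_set p"
  proof -
    obtain k where k: "p = k + 2" using p2 by (metis add.commute less_imp_add_positive less_trans pos2 less_imp_Suc_add)
    have "(p-1)^2 + 0^2 = 1 + p * k" unfolding k by (simp add: power2_eq_square algebra_simps)
    moreover have "(1 + p * k) mod p = 1" using p2 by (metis mod_mult_self2 mod_less one_less_numeral_iff semiring_norm(76) less_trans mult.commute)
    ultimately show ?thesis unfolding mem using p2 by (simp add: cong_def)
  qed
  have cS: "card (G_set p) = card S' + 1"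
    unfolding S'_def using pm1 finG card_gt_0_iff[of "G_set p"] by (auto simp add: card_Diff_singleton)
  have finS: "finite S'" using finG unfolding S'_def by simp
  have finT: "finite T" unfolding T_def by simp
  have cTR: "card T + card R = p"
  proof -
    have "T \<union> R = {..<p}" "T \<inter> R = {}" unfolding T_def R_def by auto
    then show ?thesis using card_Un_disjoint[of T R] unfolding T_def R_def by simp
  qed
  define phi where "phi = (\<lambda>(a::nat,b::nat). SOME t. t < p \<and> [t*(a+1) = b] (mod p))"
  have S'mem: "a < p \<and> b < p \<and> [a^2+b^2 = 1] (mod p) \<and> a + 1 < p" if "(a,b) \<in> S'" for a b
  proof -
    have "a < p" "b < p" "[a^2+b^2 = 1] (mod p)" "(a,b) \<noteq> (p-1,0)" using that mem[of a b] unfolding S'_def by auto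
    moreover have "a \<noteq> p - 1"
    proof
      assume a: "a = p - 1"
      then have "[(p-1)^2 + b^2 = (p-1)^2 + 0] (mod p)" using \<open>[a^2+b^2 = 1] (mod p)\<close> pm1
        unfolding mem by (metis cong_sym cong_trans power_zero_numeral add_0_right)
      then have "[b^2 = 0] (mod p)" by (simp only: cong_add_lcancel_nat)
      then have "p dvd b" using p(1) by (simp add: cong_0_iff prime_dvd_power_iff)
      then have "b = 0" using \<open>b < p\<close> by (metis dvd_imp_le leD neq0_conv)
      then show False using a \<open>(a,b) \<noteq> (p-1,0)\<close> by simp
    qed
    ultimately show ?thesis by auto
  qed
  have phi: "phi (a,b) < p \<and> [phi (a,b) * (a+1) = b] (mod p)" if "(a,b) \<in> S'" for a b
  proof -
    have h: "a < p" "b < p" "[a^2+b^2 = 1] (mod p)" "a + 1 < p" using S'mem[OF that] by auto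
    have "\<not> p dvd (a+1)" using h(4) by (auto dest: dvd_imp_le)
    then obtain x where x: "[(a+1)*x = 1] (mod p)" using cop cong_solve_coprime_nat by fastforce
    have "[(x*b mod p)*(a+1) = ((a+1)*x)*b] (mod p)"
      unfolding cong_def by (metis mod_mult_left_eq mult.commute mult.left_commute)
    also have "[((a+1)*x)*b = 1*b] (mod p)" using x by (intro cong_mult cong_refl)
    finally have "x*b mod p < p \<and> [(x*b mod p)*(a+1) = b] (mod p)" using p2 by simp
    then show ?thesis unfolding phi_def by simp (rule someI)
  qed
  have phiT: "phi (a,b) \<in> T" "[(a+1)*(1+(phi (a,b))^2) = 2] (mod p)" if "(a,b) \<in> S'" for a b
  proof -
    have h: "a < p" "b < p" "[a^2+b^2 = 1] (mod p)" "a + 1 < p" using S'mem[OF that] by auto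
    have "\<not> p dvd (a+1)" using h(4) by (auto dest: dvd_imp_le)
    then show k: "[(a+1)*(1+(phi (a,b))^2) = 2] (mod p)"
      using key1 cop h(3) phi[OF that] by blast
    show "phi (a,b) \<in> T"
    proof -
      have "\<not> p dvd (phi (a,b))^2 + 1"
      proof
        assume "p dvd (phi (a,b))^2 + 1"
        then have "p dvd (a+1)*(1+(phi (a,b))^2)" by (metis add.commute dvd_mult)
        then have "[(a+1)*(1+(phi (a,b))^2) = 0] (mod p)" by (simp only: cong_0_iff)
        then show False using k n2 by (metis cong_sym cong_trans)
      qed
      then show ?thesis unfolding T_def using phi[OF that] by simp
    qed
  qed
  have "card S' \<le> card T"
  proof (rule card_inj_on_le[OF _ _ finT])
    show "phi ` S' \<subseteq> T" using phiT by auto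
    show "inj_on phi S'"
    proof (rule inj_onI)
      fix x y assume x: "x \<in> S'" and y: "y \<in> S'" and e: "phi x = phi y"
      obtain a b where ab: "x = (a,b)" by (cases x)
      obtain a' b' where ab': "y = (a',b')" by (cases y)
      define t where "t = phi (a,b)"
      have tT: "t \<in> T" using phiT x ab t_def by simp
      then have ct: "coprime (1+t^2) p" unfolding T_def using cop by (simp add: add.commute)
      have "[(a+1)*(1+t^2) = 2] (mod p)" using phiT x ab t_def by simp
      moreover have "[(a'+1)*(1+t^2) = 2] (mod p)" using phiT y ab' t_def e ab by simp
      ultimately have "[(1+t^2)*(a+1) = (1+t^2)*(a'+1)] (mod p)"
        by (metis cong_sym cong_trans mult.commute)
      then have "[a+1 = a'+1] (mod p)" using ct by (metis cong_mult_lcancel_nat)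
      then have "[a = a'] (mod p)" by (simp only: cong_add_rcancel_nat)
      then have aa: "a = a'" using S'mem x y ab ab' cong_less_modulus_unique_nat by blast
      have "[b = t*(a+1)] (mod p)" using phi x ab t_def by (simp add: cong_sym)
      moreover have "[t*(a+1) = b'] (mod p)" using phi y ab' t_def e ab aa by simp
      ultimately have "[b = b'] (mod p)" by (rule cong_trans)
      then have "b = b'" using S'mem x y ab ab' cong_less_modulus_unique_nat by blast
      then show "x = y" using aa ab ab' by simp
    qed
  qed
  define uu where "uu = (\<lambda>t::nat. SOME u. u < p \<and> [u*(1+t^2) = 2] (mod p))"
  define psi where "psi = (\<lambda>t. (uu t - 1, (t * uu t) mod p))"
  have uu: "uu t < p \<and> [uu t*(1+t^2) = 2] (mod p) \<and> uu t \<noteq> 0" if "t \<in> T" for t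
  proof -
    have "\<not> p dvd (1+t^2)" using that unfolding T_def by (simp add: add.commute)
    then obtain x where x: "[(1+t^2)*x = 1] (mod p)" using cop cong_solve_coprime_nat by fastforce
    have "[(2*x mod p)*(1+t^2) = ((1+t^2)*x)*2] (mod p)"
      unfolding cong_def by (metis mod_mult_left_eq mult.commute mult.left_commute)
    also have "[((1+t^2)*x)*2 = 1*2] (mod p)" using x by (intro cong_mult cong_refl)
    finally have "2*x mod p < p \<and> [(2*x mod p)*(1+t^2) = 2] (mod p)" using p2 by simp
    then have u: "uu t < p \<and> [uu t*(1+t^2) = 2] (mod p)" unfolding uu_def by simp (rule someI)
    moreover have "uu t \<noteq> 0"
    proof
      assume "uu t = 0"
      then show False using u n2 by (simp add: cong_sym)
    qed
    ultimately show ?thesis by simp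
  qed
  have "card T \<le> card S'"
  proof (rule card_inj_on_le[OF _ _ finS])
    show "psi ` T \<subseteq> S'"
    proof
      fix z assume "z \<in> psi ` T"
      then obtain t where t: "t \<in> T" and z: "z = psi t" by auto
      define a where "a = uu t - 1"
      have ua: "uu t = a + 1" using uu[OF t] unfolding a_def by simp
      have al: "a + 1 < p" using uu[OF t] ua by simp
      have "[(t * uu t) mod p = t*(a+1)] (mod p)" using ua by (simp add: cong_def)
      moreover have "[(a+1)*(1+t^2) = 2] (mod p)" using uu[OF t] ua by (simp add: mult.commute)
      ultimately have "[a^2 + ((t * uu t) mod p)^2 = 1] (mod p)" using key2 by blast
      then have "(a, (t * uu t) mod p) \<in> G_set p" unfolding mem using al p2 by simp
      moreover have "a \<noteq> p - 1" using al by simp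
      ultimately show "z \<in> S'" unfolding z psi_def S'_def a_def by simp
    qed
    show "inj_on psi T"
    proof (rule inj_onI)
      fix t t' assume t: "t \<in> T" and t': "t' \<in> T" and e: "psi t = psi t'"
      have "uu t - 1 = uu t' - 1" using e unfolding psi_def by simp
      then have "uu t = uu t'" using uu[OF t] uu[OF t'] by linarith
      then have "[uu t * t = uu t * t'] (mod p)" using e unfolding psi_def by (simp add: cong_def mult.commute)
      moreover have "\<not> p dvd uu t" using uu[OF t] by (metis dvd_imp_le leD neq0_conv)
      then have "coprime (uu t) p" using cop by blast
      ultimately have "[t = t'] (mod p)" by (metis cong_mult_lcancel_nat)
      then show "t = t'" using t t' unfolding T_def using cong_less_modulus_unique_nat by blast
    qed
  qed
  show ?thesis using cS cTR \<open>card S' \<le> card T\<close> \<open>card T \<le> card S'\<close> unfolding R_def by simp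
qed


lemma Phi_prime:
  assumes p: "prime p" "odd p"
  shows "Phi p = (if p mod 4 = 1 then p - 1 else p + 1)"
  using circle_count[OF p] roots_card[OF p] unfolding Phi_def by (auto split: if_splits)

lemma mod_sq_sum: "((a mod m)^2 + (b mod m)^2) mod m = (a^2 + b^2) mod (m::nat)"
proof -
  have 1: "(a mod m)^2 mod m = a^2 mod m" by (rule power_mod)
  have 2: "(b mod m)^2 mod m = b^2 mod m" by (rule power_mod)
  have "((a mod m)^2 + (b mod m)^2) mod m = ((a mod m)^2 mod m + (b mod m)^2 mod m) mod m"
    by (rule mod_add_eq[symmetric])
  also have "\<dots> = (a^2 mod m + b^2 mod m) mod m" using 1 2 by simp
  also have "\<dots> = (a^2+b^2) mod m" by (rule mod_add_eq)
  finally show ?thesis .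
qed

lemma Phi_mult:
  fixes m n :: nat
  assumes cop: "coprime m n" and m: "m > 1" and n: "n > 1"
  shows "Phi (m*n) = Phi m * Phi n"
proof -
  define f where "f = (\<lambda>(a::nat,b::nat). ((a mod m, b mod m), (a mod n, b mod n)))"
  have mn: "m * n > 1" using m n by (metis less_1_mult)
  have memG: "(a,b) \<in> G_set k \<longleftrightarrow> a < k \<and> b < k \<and> [a^2+b^2 = 1] (mod k)" for a b k
    unfolding G_set_def cong_def by simp
  have "bij_betw f (G_set (m*n)) (G_set m \<times> G_set n)"
  proof (rule bij_betwI')
    fix x y assume x: "x \<in> G_set (m*n)" and y: "y \<in> G_set (m*n)"
    obtain a b where ab: "x = (a,b)" by (cases x)
    obtain a' b' where ab': "y = (a',b')" by (cases y)
    show "f x = f y \<longleftrightarrow> x = y"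
    proof
      assume "f x = f y"
      then have "[a = a'] (mod m)" "[a = a'] (mod n)" "[b = b'] (mod m)" "[b = b'] (mod n)"
        unfolding f_def ab ab' cong_def by auto
      then have c: "[a = a'] (mod m*n)" "[b = b'] (mod m*n)" using cop coprime_cong_mult_nat by blast+
      have l: "a < m*n" "b < m*n" "a' < m*n" "b' < m*n" using x y unfolding ab ab' G_set_def by auto
      have "a = a'" using cong_less_modulus_unique_nat[OF c(1) l(1) l(3)] .
      moreover have "b = b'" using cong_less_modulus_unique_nat[OF c(2) l(2) l(4)] .
      ultimately show "x = y" using ab ab' by simp
    qed simp
  next
    fix x assume x: "x \<in> G_set (m*n)"
    obtain a b where ab: "x = (a,b)" by (cases x)
    have "[a^2+b^2 = 1] (mod m*n)" using x ab memG by blast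
    then have c0: "[a^2+b^2 = 1] (mod m*n)" "[a^2+b^2 = 1] (mod n*m)" by (simp_all add: mult.commute)
    have "[a^2+b^2 = 1] (mod m)" "[a^2+b^2 = 1] (mod n)"
      using cong_modulus_mult_nat[OF c0(1)] cong_modulus_mult_nat[OF c0(2)] by auto
    then show "f x \<in> G_set m \<times> G_set n" unfolding f_def ab G_set_def cong_def using m n
      by (simp add: mod_sq_sum)
  next
    fix y assume y: "y \<in> G_set m \<times> G_set n"
    obtain a1 b1 a2 b2 where yy: "y = ((a1,b1),(a2,b2))" by (cases y) auto
    have h1: "a1 < m" "b1 < m" "[a1^2+b1^2 = 1] (mod m)" using y yy memG by auto
    have h2: "a2 < n" "b2 < n" "[a2^2+b2^2 = 1] (mod n)" using y yy memG by auto
    obtain x1 where x1: "[x1 = a1] (mod m)" "[x1 = a2] (mod n)"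
      using binary_chinese_remainder_nat[OF cop] by blast
    obtain y1 where y1: "[y1 = b1] (mod m)" "[y1 = b2] (mod n)"
      using binary_chinese_remainder_nat[OF cop] by blast
    define a where "a = x1 mod (m*n)"
    define b where "b = y1 mod (m*n)"
    have am: "[a = a1] (mod m)" "[b = b1] (mod m)"
      unfolding a_def b_def using x1 y1 by (simp_all add: cong_def mod_mod_cancel)
    have an: "[a = a2] (mod n)" "[b = b2] (mod n)"
      unfolding a_def b_def using x1 y1 by (simp_all add: cong_def mod_mod_cancel)
    have "[a^2+b^2 = a1^2+b1^2] (mod m)" using am by (intro cong_add cong_pow)
    then have c1: "[a^2+b^2 = 1] (mod m)" using h1 cong_trans by blast
    have "[a^2+b^2 = a2^2+b2^2] (mod n)" using an by (intro cong_add cong_pow)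
    then have c2: "[a^2+b^2 = 1] (mod n)" using h2 cong_trans by blast
    have "[a^2+b^2 = 1] (mod m*n)" using c1 c2 cop coprime_cong_mult_nat by blast
    moreover have "a < m*n" "b < m*n" unfolding a_def b_def using m n by (auto intro!: mod_less_divisor)
    ultimately have "(a,b) \<in> G_set (m*n)" using memG by blast
    moreover have "f (a,b) = y" unfolding f_def yy using am an h1 h2
      by (simp add: cong_def)
    ultimately show "\<exists>x\<in>G_set (m*n). y = f x" by metis
  qed
  then have "card (G_set (m*n)) = card (G_set m \<times> G_set n)" by (rule bij_betw_same_card)
  then show ?thesis unfolding Phi_def by (simp add: card_cartesian_product)
qed


lemma dvd_lt2: fixes X Y :: int assumes "X dvd Y" "0 < Y" "Y < 2*X" shows "Y = X"
proof -
  obtain k where k: "Y = X * k" using assms(1) by (auto elim: dvdE)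
  have X0: "X > 0" using assms by linarith
  have "k > 0" using k X0 assms(2) by (simp add: zero_less_mult_iff)
  moreover have "k < 2" using k X0 assms(3) by (metis mult.commute mult_less_cancel_left_pos)
  ultimately have "k = 1" by simp
  then show ?thesis using k by simp
qed

theorem mainTheorem14:
  fixes p q :: nat
  assumes "prime p" "prime q" "odd p" "odd q" "p < q"
  shows "G_Lehmer (p * q) \<longleftrightarrow> (q = p + 2 \<and> 8 dvd (p + q))"
proof -
  have p2: "p \<ge> 2" using assms(1) prime_ge_2_nat by blast
  have "p \<noteq> 2" using assms(3) by auto
  then have p3: "p \<ge> 3" using p2 by linarith
  have q5: "q \<ge> 5" using assms(4,5) p3 by presburger
  have cop: "coprime p q" using assms(1,2,5) primes_coprime by (metis less_not_refl)
  have PhiPQ: "Phi (p*q) = Phi p * Phi q" using Phi_mult[OF cop] p3 q5 by simp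
  have np: "\<not> prime (p*q)" using prime_product[of p q] p3 q5 by auto
  have "p * q \<ge> 3 * 5" using p3 q5 by (intro mult_le_mono)
  then have gt: "p * q > 1" by linarith
  have L: "G_Lehmer (p*q) \<longleftrightarrow> int (Phi p) * int (Phi q) dvd int (F (p*q))"
    unfolding G_Lehmer_def PhiPQ using np gt by (metis of_nat_dvd_iff of_nat_mult)
  have Pp: "int (Phi p) = (if p mod 4 = 1 then int p - 1 else int p + 1)"
    using Phi_prime[OF assms(1,3)] p3 by auto
  have Pq: "int (Phi q) = (if q mod 4 = 1 then int q - 1 else int q + 1)"
    using Phi_prime[OF assms(2,4)] q5 by auto
  have pm: "p mod 4 = 1 \<or> p mod 4 = 3" using assms(3) by presburger
  have qm: "q mod 4 = 1 \<or> q mod 4 = 3" using assms(4) by presburger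
  have pqm: "(p*q) mod 4 = ((p mod 4) * (q mod 4)) mod 4" by (simp add: mod_mult_eq)
  have FN: "int (F (p*q)) = (if (p*q) mod 4 = 1 then int p * int q - 1 else int p * int q + 1)"
  proof -
    have sub: "int (p*q - Suc 0) = int p * int q - 1" by (subst of_nat_diff) (use gt p3 q5 in auto)
    show ?thesis using pqm pm qm gt sub unfolding F_def by auto
  qed
  define P where "P = int p"
  define Q where "Q = int q"
  have P3: "P \<ge> 3" and Q5: "Q \<ge> 5" and PQ: "P < Q" using p3 q5 assms(5) unfolding P_def Q_def by auto
  have PQ15: "P*Q \<ge> 3*5" using P3 Q5 by (intro mult_mono) auto
  from pm qm show ?thesis
  proof (elim disjE)
    assume a: "p mod 4 = 1" "q mod 4 = 1"
    then have "p \<ge> 5" using p3 by presburger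
    then have p5: "P \<ge> 5" unfolding P_def by simp
    have N: "int (F (p*q)) = P*Q - 1" using FN pqm a unfolding P_def Q_def by simp
    have X: "int (Phi p) * int (Phi q) = (P-1)*(Q-1)" using Pp Pq a unfolding P_def Q_def by simp
    have "(P-2)*(Q-2) \<ge> 3*3" using p5 Q5 by (intro mult_mono) auto
    then have lt: "P*Q - 1 < 2*((P-1)*(Q-1))" "0 < P*Q - 1" using P3 Q5 PQ15 by (auto simp: algebra_simps)
    have "\<not> ((P-1)*(Q-1) dvd P*Q - 1)"
    proof
      assume d: "(P-1)*(Q-1) dvd P*Q - 1"
      have "P*Q - 1 = (P-1)*(Q-1)" using dvd_lt2[OF d lt(2) lt(1)] .
      then have "P + Q = 2" by (simp add: algebra_simps)
      then show False using P3 Q5 by simp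
    qed
    then have "\<not> G_Lehmer (p*q)" unfolding L N X .
    moreover have "\<not> (q = p + 2)" using a by presburger
    ultimately show ?thesis by simp
  next
    assume a: "p mod 4 = 1" "q mod 4 = 3"
    then have "p \<ge> 5" using p3 by presburger
    then have p5: "P \<ge> 5" unfolding P_def by simp
    have N: "int (F (p*q)) = P*Q + 1" using FN pqm a unfolding P_def Q_def by simp
    have X: "int (Phi p) * int (Phi q) = (P-1)*(Q+1)" using Pp Pq a unfolding P_def Q_def by simp
    have "(P-2)*(Q+2) \<ge> 3*7" using p5 Q5 by (intro mult_mono) auto
    then have lt: "P*Q + 1 < 2*((P-1)*(Q+1))" "0 < P*Q + 1" using P3 Q5 PQ15 by (auto simp: algebra_simps)
    have "\<not> ((P-1)*(Q+1) dvd P*Q + 1)"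
    proof
      assume d: "(P-1)*(Q+1) dvd P*Q + 1"
      have "P*Q + 1 = (P-1)*(Q+1)" using dvd_lt2[OF d lt(2) lt(1)] .
      then have "P = Q + 2" by (simp add: algebra_simps)
      then show False using PQ by simp
    qed
    then have "\<not> G_Lehmer (p*q)" unfolding L N X .
    moreover have "\<not> (q = p + 2 \<and> 8 dvd (p + q))" using a by presburger
    ultimately show ?thesis by simp
  next
    assume a: "p mod 4 = 3" "q mod 4 = 1"
    have N: "int (F (p*q)) = P*Q + 1" using FN pqm a unfolding P_def Q_def by simp
    have X: "int (Phi p) * int (Phi q) = (P+1)*(Q-1)" using Pp Pq a unfolding P_def Q_def by simp
    have "(P+2)*(Q-2) \<ge> 5*3" using P3 Q5 by (intro mult_mono) auto
    then have lt: "P*Q + 1 < 2*((P+1)*(Q-1))" "0 < P*Q + 1" using P3 Q5 PQ15 by (auto simp: algebra_simps)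
    have "G_Lehmer (p*q) \<longleftrightarrow> P*Q + 1 = (P+1)*(Q-1)"
      unfolding L N X using dvd_lt2[OF _ lt(2) lt(1)] by (metis dvd_refl)
    also have "\<dots> \<longleftrightarrow> Q = P + 2" by (auto simp add: algebra_simps)
    also have "\<dots> \<longleftrightarrow> q = p + 2" unfolding P_def Q_def by linarith
    also have "\<dots> \<longleftrightarrow> (q = p + 2 \<and> 8 dvd (p + q))"
    proof -
      have "q = p + 2 \<Longrightarrow> 8 dvd (p + q)" using a by presburger
      then show ?thesis by blast
    qed
    finally show ?thesis .
  next
    assume a: "p mod 4 = 3" "q mod 4 = 3"
    have N: "int (F (p*q)) = P*Q - 1" using FN pqm a unfolding P_def Q_def by simp
    have X: "int (Phi p) * int (Phi q) = (P+1)*(Q+1)" using Pp Pq a unfolding P_def Q_def by simp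
    have "\<not> ((P+1)*(Q+1) dvd P*Q - 1)"
    proof
      assume d: "(P+1)*(Q+1) dvd P*Q - 1"
      have "P*Q \<ge> 3*5" using P3 Q5 by (intro mult_mono) auto
      then have "0 < P*Q - 1" "P*Q - 1 < (P+1)*(Q+1)" using P3 Q5 PQ15 by (auto simp: algebra_simps)
      then show False using d zdvd_imp_le by (metis not_le)
    qed
    then have "\<not> G_Lehmer (p*q)" unfolding L N X by simp
    moreover have "\<not> (q = p + 2)" using a by presburger
    ultimately show ?thesis by simp
  qed
qed

end
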